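(* Let $p$ be a prime, $h\in\mathbb{Z}[x]$ monic, and $m\in\mathbb{Z}_p$. Then: (1) $\widehat\chi_t^{(h)}(m)$ is a nonnegative integer for every real $t>0$; (2) $\widehat\chi_t^{(h)}(m)$ is nonincreasing in $t$; (3) $v_p(h(m))=\int_0^\infty\chi_t^{(h)}(m)\,dt=\sum_{t=1}^\infty\widehat\chi_t^{(h)}(m)$ (as elements of $[0,\infty]$).
   Context: $v_p$ is the $p$-adic valuation extended to $\overline{\mathbb{Q}_p}$. For monic $h=\prod_i(x-\delta_i)$ over $\overline{\mathbb{Q}_p}$ (roots with multiplicity), $m\in\mathbb{Z}_p$, $t\ge0$: $\chi_t^{(h)}(m)=\#\{i:v_p(m-\delta_i)\ge t\}$, and for real $t>0$, $\widehat\chi_t^{(h)}(m)=\int_{\lceil t\rceil-1}^{\lceil t\rceil}\chi_s^{(h)}(m)\,ds$. *)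

theory Defs
  imports "HOL-Analysis.Analysis" "HOL-Computational_Algebra.Polynomial"
    "HOL-Computational_Algebra.Primes"
begin

text \<open>The canonical
instance is the extension of v_p to an algebraic closure of Q_p.\<close>
definition is_padic_valuation :: "nat \<Rightarrow> ('k::field \<Rightarrow> ereal) \<Rightarrow> bool" where
  "is_padic_valuation p v \<longleftrightarrow>
     (\<forall>x. v x \<noteq> -\<infinity>) \<and> (\<forall>x. v x = \<infinity> \<longleftrightarrow> x = 0) \<and>
     (\<forall>x y. v (x * y) = v x + v y) \<and>
     (\<forall>x y. min (v x) (v y) \<le> v (x + y)) \<and>
     (\<forall>n::int. n \<noteq> 0 \<longrightarrow> v (of_int n) = ereal (real (multiplicity (int p) n)))"

text \<open>m is a p-adic integer: a v-adic limit of rational integers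
(inside an algebraic closure of Q_p this set is exactly Z_p).\<close>
definition padic_integer :: "('k::field \<Rightarrow> ereal) \<Rightarrow> 'k \<Rightarrow> bool" where
  "padic_integer v m \<longleftrightarrow> (\<forall>N::nat. \<exists>a::int. ereal (real N) \<le> v (m - of_int a))"

text \<open>chi_t(m) = #{i. v(m - delta_i) >= t}, roots delta_i with multiplicity in R.\<close>
definition chi :: "('k::field \<Rightarrow> ereal) \<Rightarrow> 'k multiset \<Rightarrow> 'k \<Rightarrow> real \<Rightarrow> nat" where
  "chi v R m t = size (filter_mset (\<lambda>\<delta>. ereal t \<le> v (m - \<delta>)) R)"

definition chi_hat :: "('k::field \<Rightarrow> ereal) \<Rightarrow> 'k multiset \<Rightarrow> 'k \<Rightarrow> real \<Rightarrow> real" where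
  "chi_hat v R m t =
     integral {real_of_int (\<lceil>t\<rceil> - 1) .. real_of_int \<lceil>t\<rceil>} (\<lambda>s. real (chi v R m s))"

end

theory Submission
  imports Defs
begin


context
  fixes p :: nat and v :: "'k::field \<Rightarrow> ereal"
  assumes V: "is_padic_valuation p v"
begin

lemma vp: "(\<forall>x. v x \<noteq> -\<infinity>) \<and> (\<forall>x. v x = \<infinity> \<longleftrightarrow> x = 0) \<and> (\<forall>x y. v (x * y) = v x + v y) \<and>
  (\<forall>x y. min (v x) (v y) \<le> v (x + y)) \<and>
  (\<forall>n::int. n \<noteq> 0 \<longrightarrow> v (of_int n) = ereal (real (multiplicity (int p) n)))"
  using V unfolding is_padic_valuation_def by assumption

lemma v_notminf: "v x \<noteq> -\<infinity>" by (rule spec[OF conjunct1[OF vp]])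
lemma v_inf_iff: "v x = \<infinity> \<longleftrightarrow> x = 0" by (rule spec[OF conjunct1[OF conjunct2[OF vp]]])
lemma v_mult: "v (x * y) = v x + v y"
  by (rule spec[OF spec[OF conjunct1[OF conjunct2[OF conjunct2[OF vp]]]]])
lemma v_add: "min (v x) (v y) \<le> v (x + y)"
  by (rule spec[OF spec[OF conjunct1[OF conjunct2[OF conjunct2[OF conjunct2[OF vp]]]]]])
lemma v_int: "n \<noteq> 0 \<Longrightarrow> v (of_int n) = ereal (real (multiplicity (int p) n))"
  by (rule mp[OF spec[OF conjunct2[OF conjunct2[OF conjunct2[OF conjunct2[OF vp]]]]]])

lemma v_one: "v 1 = 0"
  using v_int[of 1] by simp

lemma v_neg: "v (- x) = v x"
proof -
  have "v (-1) = 0" using v_int[of "-1"] by (simp add: multiplicity_unit_right)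
  then show ?thesis using v_mult[of "-1" x] by simp
qed

lemma v_zero[simp]: "v 0 = \<infinity>" using v_inf_iff by simp

lemma v_int_ge0: "0 \<le> v (of_int n)"
  by (cases "n = 0") (simp_all add: v_int)

lemma v_strict: assumes "v x < v y" shows "v (x + y) = v x"
proof -
  have a: "v x \<le> v (x + y)" using v_add[of x y] assms by simp
  have "min (v (x + y)) (v (- y)) \<le> v x" using v_add[of "x+y" "-y"] by simp
  then have "v x \<ge> v (x+y)" using assms v_neg[of y] by (auto simp: min_def split: if_splits)
  with a show ?thesis by simp
qed

lemma v_sub_sym: "v (x - y) = v (y - x)"
  using v_neg[of "x - y"] by simp


lemma ereal_strict_aux:
  fixes w x a b :: ereal
  assumes "w < x" "a \<le> b" "\<bar>w\<bar> \<noteq> \<infinity>" "\<bar>a\<bar> \<noteq> \<infinity>"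
  shows "w + a < x + b"
  using assms by (cases w; cases x; cases a; cases b) auto

definition isGV :: "'k poly \<Rightarrow> ereal \<Rightarrow> bool" where
  "isGV f w \<longleftrightarrow> (\<forall>k. w \<le> v (coeff f k)) \<and> (\<exists>k. v (coeff f k) = w)"

lemma coeff_mult_lin: "coeff (f * [:c, d:]) k = c * coeff f k + (case k of 0 \<Rightarrow> 0 | Suc j \<Rightarrow> d * coeff f j)"
  by (simp add: mult_pCons_right coeff_pCons split: nat.splits)

lemma gauss_lin:
  assumes "isGV f w"
  shows "isGV (f * [:c, d:]) (w + min (v c) (v d))"
proof -
  from assms have lb: "\<And>k. w \<le> v (coeff f k)" and ex: "\<exists>k. v (coeff f k) = w"
    unfolding isGV_def by auto
  have lower: "w + min (v c) (v d) \<le> v (coeff (f * [:c, d:]) k)" for k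
  proof -
    have "w + min (v c) (v d) \<le> v (coeff f k) + v c"
      by (rule add_mono) (use lb in auto)
    then have 1: "w + min (v c) (v d) \<le> v (c * coeff f k)"
      by (simp add: v_mult add.commute)
    have 2: "w + min (v c) (v d) \<le> v (case k of 0 \<Rightarrow> 0 | Suc j \<Rightarrow> d * coeff f j)"
    proof (cases k)
      case (Suc j)
      have "w + min (v c) (v d) \<le> v (coeff f j) + v d"
        by (rule add_mono) (use lb in auto)
      then show ?thesis using Suc by (simp add: v_mult add.commute)
    qed simp
    show ?thesis unfolding coeff_mult_lin
      using v_add[of "c * coeff f k" "case k of 0 \<Rightarrow> 0 | Suc j \<Rightarrow> d * coeff f j"] 1 2
      by (meson min.boundedI order_trans)
  qed
  show ?thesis
  proof (cases "w = \<infinity> \<or> (c = 0 \<and> d = 0)")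
    case True
    have "w + min (v c) (v d) = \<infinity>"
      using True v_notminf by (auto)
    then show ?thesis unfolding isGV_def using lower
      by (metis ereal_infty_less_eq(1))
  next
    case False
    then have wfin: "w \<noteq> \<infinity>" and cd: "c \<noteq> 0 \<or> d \<noteq> 0" by auto
    have wfin2: "\<bar>w\<bar> \<noteq> \<infinity>" using wfin ex v_notminf by auto
    have ex2: "\<exists>k. v (coeff (f * [:c, d:]) k) = w + min (v c) (v d)"
    proof (cases "v c \<le> v d")
      case True
      then have cnz: "c \<noteq> 0" using cd v_inf_iff by (metis ereal_infty_less_eq(1))
      then have cfin: "\<bar>v c\<bar> \<noteq> \<infinity>" using v_inf_iff v_notminf by auto
      define k0 where "k0 = (LEAST k. v (coeff f k) = w)"
      have k0: "v (coeff f k0) = w" unfolding k0_def using ex by (rule LeastI_ex)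
      have below: "j < k0 \<Longrightarrow> w < v (coeff f j)" for j
        using lb[of j] not_less_Least[of j "\<lambda>k. v (coeff f k) = w"] unfolding k0_def by auto
      have A: "v (c * coeff f k0) = w + v c" using k0 by (simp add: v_mult add.commute)
      have B: "w + v c < v (case k0 of 0 \<Rightarrow> 0 | Suc j \<Rightarrow> d * coeff f j)"
      proof (cases k0)
        case 0 then show ?thesis using wfin2 cfin by auto
      next
        case (Suc j)
        have "w < v (coeff f j)" using below Suc by auto
        then have "w + v c < v (coeff f j) + v d"
          by (rule ereal_strict_aux) (use \<open>w < v (coeff f j)\<close> True wfin2 cfin in auto)
        then show ?thesis using Suc by (simp add: v_mult add.commute)
      qed
      show ?thesis using v_strict[of "c * coeff f k0"] A B True
        unfolding coeff_mult_lin by (intro exI[of _ k0]) (simp add: min_def)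
    next
      case False
      then have dnz: "d \<noteq> 0" using v_inf_iff by (metis ereal_infty_less_eq(1) linear)
      then have dfin: "\<bar>v d\<bar> \<noteq> \<infinity>" using v_inf_iff v_notminf by auto
      have bnd: "k \<le> degree f" if "v (coeff f k) = w" for k
      proof (rule ccontr)
        assume "\<not> k \<le> degree f"
        then have "coeff f k = 0" by (simp add: coeff_eq_0)
        then show False using that wfin by simp
      qed
      obtain kk where kk: "v (coeff f kk) = w" using ex by blast
      define k1 where "k1 = (GREATEST k. v (coeff f k) = w)"
      have k1: "v (coeff f k1) = w" unfolding k1_def by (rule GreatestI_nat[where P="\<lambda>k. v (coeff f k) = w", OF kk bnd])
      have "v (coeff f (Suc k1)) \<noteq> w"
      proof
        assume "v (coeff f (Suc k1)) = w"
        then have "Suc k1 \<le> k1" unfolding k1_def by (rule Greatest_le_nat[where P="\<lambda>k. v (coeff f k) = w", OF _ bnd])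
        then show False by simp
      qed
      then have above: "w < v (coeff f (Suc k1))" using lb[of "Suc k1"] by simp
      have A: "v (d * coeff f k1) = w + v d" using k1 by (simp add: v_mult add.commute)
      have B: "w + v d < v (c * coeff f (Suc k1))"
      proof -
        have "w + v d < v (coeff f (Suc k1)) + v c"
          using False above wfin2 dfin ereal_strict_aux[of w "v (coeff f (Suc k1))" "v d" "v c"] by simp
        then show ?thesis by (simp add: v_mult add.commute)
      qed
      show ?thesis using v_strict[of "d * coeff f k1" "c * coeff f (Suc k1)"] A B False
        unfolding coeff_mult_lin by (intro exI[of _ "Suc k1"]) (simp add: min_def add.commute)
    qed
    show ?thesis unfolding isGV_def using lower ex2 by blast
  qed
qed


lemma gauss_prod:
  "isGV (\<Prod>\<delta>\<in>#R. [:c \<delta>, d \<delta>:]) (\<Sum>\<delta>\<in>#R. min (v (c \<delta>)) (v (d \<delta>)))"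
proof (induction R)
  case empty
  have "isGV 1 0" unfolding isGV_def
    by (auto simp: coeff_1 v_one intro: exI[of _ 0])
  then show ?case by simp
next
  case (add x R)
  from gauss_lin[OF add.IH, of "c x" "d x"] show ?case
    by (simp add: mult.commute add.commute)
qed

lemma sum_mset_le_elem:
  fixes f :: "'a \<Rightarrow> ereal"
  assumes "\<And>y. y \<in># R \<Longrightarrow> f y \<le> 0" "x \<in># R"
  shows "(\<Sum>y\<in>#R. f y) \<le> f x"
proof -
  obtain R' where R: "R = add_mset x R'" using assms(2) by (metis multi_member_split)
  have "(\<Sum>y\<in>#R'. f y) \<le> (\<Sum>y\<in>#R'. 0)"
    by (rule sum_mset_mono) (use assms(1) R in auto)
  then have "(\<Sum>y\<in>#R'. f y) \<le> 0" by simp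
  then show ?thesis using R by (simp add: add_left_mono[of _ 0 "f x", simplified])
qed

lemma coeff_map_of_int: "coeff (map_poly of_int h) k = (of_int (coeff h k) :: 'k)"
  by (simp add: coeff_map_poly)

lemma root_nonneg:
  assumes "lead_coeff h = 1" and H: "map_poly of_int h = (\<Prod>\<delta>\<in>#R. [:-\<delta>, 1:])" and "x \<in># R"
  shows "0 \<le> v x"
proof -
  have G: "isGV (map_poly of_int h) (\<Sum>\<delta>\<in>#R. min (v (-\<delta>)) (v 1))"
    unfolding H by (rule gauss_prod)
  then obtain k where "v (coeff (map_poly of_int h) k) = (\<Sum>\<delta>\<in>#R. min (v (-\<delta>)) (v 1))"
    unfolding isGV_def by blast
  then have "0 \<le> (\<Sum>\<delta>\<in>#R. min (v (-\<delta>)) (v 1))"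
    using v_int_ge0 by (metis coeff_map_of_int)
  also have "\<dots> \<le> min (v (-x)) (v 1)"
    by (rule sum_mset_le_elem) (use assms(3) v_one in auto)
  finally show ?thesis by (simp add: v_neg v_one)
qed

lemma padic_nonneg:
  assumes "padic_integer v m" shows "0 \<le> v m"
proof -
  obtain a :: int where "ereal (real 0) \<le> v (m - of_int a)"
    using assms unfolding padic_integer_def by blast
  then have "0 \<le> v (m - of_int a)" by (simp add: zero_ereal_def)
  moreover have "min (v (m - of_int a)) (v (of_int a)) \<le> v m"
    using v_add[of "m - of_int a" "of_int a"] by simp
  ultimately show ?thesis using v_int_ge0[of a] by (meson min.boundedI order_trans)
qed

lemma pcompose_prod_mset:
  "pcompose (\<Prod>x\<in>#R. f x) q = (\<Prod>x\<in>#R. pcompose (f x) q)"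
  by (induction R) (simp_all add: pcompose_mult pcompose_1)

lemma mpi_add: "map_poly (of_int::int\<Rightarrow>'a::ring_1) (f + g) = map_poly of_int f + map_poly of_int g"
  by (intro poly_eqI) (simp add: coeff_map_poly)

lemma mpi_mult: "map_poly (of_int::int\<Rightarrow>'a::comm_ring_1) (f * g) = map_poly of_int f * map_poly of_int g"
proof (induction f)
  case 0 then show ?case by simp
next
  case (pCons a f)
  then show ?case by (simp add: mpi_add map_poly_smult map_poly_pCons algebra_simps)
qed

lemma mpi_lin: "map_poly (of_int::int\<Rightarrow>'a::ring_1) [:a, b:] = [:of_int a, of_int b:]"
  by (simp add: map_poly_pCons)

lemma map_of_int_pcompose:
  "map_poly (of_int :: int \<Rightarrow> 'k) (pcompose g q) = pcompose (map_poly of_int g) (map_poly of_int q)"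
proof (induction g)
  case 0 then show ?case by simp
next
  case (pCons a g)
  then show ?case by (simp add: pcompose_pCons map_poly_pCons mpi_mult mpi_add)
qed

lemma min_shift:
  assumes "ereal r \<le> v (m - a)"
  shows "min (v (a - x)) (ereal r) = min (v (m - x)) (ereal r)"
proof -
  have 1: "min (v (a - m)) (v (m - x)) \<le> v (a - x)" using v_add[of "a - m" "m - x"] by simp
  have 2: "min (v (m - a)) (v (a - x)) \<le> v (m - x)" using v_add[of "m - a" "a - x"] by simp
  have 3: "ereal r \<le> v (a - m)" using assms v_sub_sym[of m a] by simp
  show ?thesis using 1 2 3 assms by (auto simp: min_def split: if_splits)
qed


lemma sum_min_nat:
  assumes "prime p" and H: "map_poly of_int h = (\<Prod>\<delta>\<in>#R. [:-\<delta>, 1:])"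
    and "padic_integer v m"
  shows "\<exists>k::nat. (\<Sum>\<delta>\<in>#R. min (v (m-\<delta>)) (ereal (real n))) = ereal (real k)"
proof -
  obtain a :: int where a: "ereal (real n) \<le> v (m - of_int a)"
    using assms(3) unfolding padic_integer_def by blast
  define P where "P = (int p) ^ n"
  have "prime (int p)" using assms(1) by (simp only: prime_nat_int_transfer)
  then have pe: "prime_elem (int p)" by (rule prime_imp_prime_elem)
  have "p \<noteq> 0" using assms(1) by auto
  then have Pnz: "P \<noteq> 0" unfolding P_def by simp
  have "multiplicity (int p) P = n" unfolding P_def by (rule multiplicity_prime_power[OF pe])
  then have vP: "v (of_int P) = ereal (real n)"
    using v_int[OF Pnz] by simp
  have Pnz': "(of_int P :: 'k) \<noteq> 0" using vP v_inf_iff by force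
  define G where "G = pcompose h [:a, P:]"
  have HG: "map_poly of_int G = (\<Prod>\<delta>\<in>#R. [:of_int a - \<delta>, of_int P:])"
    unfolding G_def map_of_int_pcompose H pcompose_prod_mset
    by (rule arg_cong[where f = prod_mset], rule image_mset_cong) (simp add: pcompose_pCons mpi_lin)
  have GV: "isGV (map_poly of_int G) (\<Sum>\<delta>\<in>#R. min (v (of_int a - \<delta>)) (v (of_int P)))"
    unfolding HG by (rule gauss_prod)
  have eq: "(\<Sum>\<delta>\<in>#R. min (v (of_int a - \<delta>)) (v (of_int P))) = (\<Sum>\<delta>\<in>#R. min (v (m-\<delta>)) (ereal (real n)))"
    unfolding vP by (rule arg_cong[where f = sum_mset], rule image_mset_cong) (rule min_shift[OF a])
  have nz: "map_poly (of_int :: int \<Rightarrow> 'k) G \<noteq> 0"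
    unfolding HG using Pnz' by (auto simp: prod_mset_zero_iff)
  obtain k where k: "v (coeff (map_poly of_int G) k) = (\<Sum>\<delta>\<in>#R. min (v (m-\<delta>)) (ereal (real n)))"
    using GV eq unfolding isGV_def by auto
  have "(\<Sum>\<delta>\<in>#R. min (v (m-\<delta>)) (ereal (real n))) \<noteq> \<infinity>"
  proof
    assume inf: "(\<Sum>\<delta>\<in>#R. min (v (m-\<delta>)) (ereal (real n))) = \<infinity>"
    have "\<forall>j. coeff (map_poly (of_int :: int \<Rightarrow> 'k) G) j = 0"
    proof (intro allI)
      fix j
      have "\<infinity> \<le> v (coeff (map_poly (of_int :: int \<Rightarrow> 'k) G) j)"
        using GV eq inf unfolding isGV_def by metis
      then have "v (coeff (map_poly (of_int :: int \<Rightarrow> 'k) G) j) = \<infinity>" by simp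
      then show "coeff (map_poly (of_int :: int \<Rightarrow> 'k) G) j = 0" using v_inf_iff by blast
    qed
    then have "map_poly (of_int :: int \<Rightarrow> 'k) G = 0" by (intro poly_eqI) simp
    then show False using nz by simp
  qed
  then have "coeff G k \<noteq> 0" using k by (auto simp: coeff_map_of_int)
  then show ?thesis using k v_int[of "coeff G k"] by (auto simp: coeff_map_of_int intro!: exI[of _ "multiplicity (int p) (coeff G k)"])
qed

end


definition ind :: "ereal \<Rightarrow> real \<Rightarrow> real" where
  "ind e s = (if ereal s \<le> e then 1 else 0)"

definition J :: "ereal \<Rightarrow> real \<Rightarrow> real \<Rightarrow> real" where
  "J e a b = (case e of ereal x \<Rightarrow> max 0 (min b x - a) | PInfty \<Rightarrow> b - a | MInfty \<Rightarrow> 0)"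

lemma chi_add: "real (chi v (add_mset d R) m s) = ind (v (m - d)) s + real (chi v R m s)"
  by (simp add: chi_def ind_def)

lemma chi_empty: "chi v {#} m s = 0" by (simp add: chi_def)

lemma ind_has_integral:
  assumes "a \<le> b"
  shows "(ind e has_integral J e a b) {a..b}"
proof (cases e)
  case (real x)
  have eq: "ind (ereal x) = (\<lambda>s. if s \<in> {..x} then 1 else 0)"
    by (auto simp: ind_def)
  have "((\<lambda>s. 1::real) has_integral (max 0 (min b x - a))) ({..x} \<inter> {a..b})"
  proof -
    have "{..x} \<inter> {a..b} = {a..min b x}" by auto
    moreover note has_integral_const_real[of "1::real" a "min b x"]
    ultimately show ?thesis by (auto simp: max_def)
  qed
  then show ?thesis unfolding real J_def eq
    by (subst has_integral_restrict_Int) simp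
next
  case PInf
  have "ind e = (\<lambda>s. 1)" by (auto simp: ind_def PInf)
  moreover note has_integral_const_real[of "1::real" a b]
  ultimately show ?thesis using assms by (simp add: J_def PInf)
next
  case MInf
  have "ind e = (\<lambda>s. 0)" by (auto simp: ind_def MInf)
  then show ?thesis by (simp add: J_def MInf)
qed

lemma chi_has_integral:
  assumes "a \<le> b"
  shows "((\<lambda>s. real (chi v R m s)) has_integral (\<Sum>d\<in>#R. J (v (m - d)) a b)) {a..b}"
proof (induction R)
  case empty then show ?case by (simp add: chi_empty)
next
  case (add x R)
  show ?case unfolding chi_add
    using has_integral_add[OF ind_has_integral[OF assms, of "v (m - x)"] add.IH] by simp
qed

lemma ind_meas: "(\<lambda>s. ennreal (ind e s)) \<in> borel_measurable lborel"
  unfolding ind_def by measurable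

lemma emeasure_Ici_inf: "emeasure lborel {0::real..} = \<infinity>"
proof (rule ccontr)
  assume "emeasure lborel {0::real..} \<noteq> \<infinity>"
  then obtain r where r: "emeasure lborel {0::real..} = ennreal r" "0 \<le> r"
    by (cases "emeasure lborel {0::real..}") auto
  have "emeasure lborel {0..r+1} \<le> emeasure lborel {0::real..}"
    by (rule emeasure_mono) auto
  then have "ennreal (r + 1) \<le> ennreal r" using r by simp
  then show False using r by (simp add: ennreal_le_iff)
qed

lemma ind_nn:
  assumes "0 \<le> e"
  shows "(\<integral>\<^sup>+ s\<in>{0..}. ennreal (ind e s) \<partial>lborel) = e2ennreal e"
proof (cases e)
  case (real x)
  have "(\<lambda>s. ennreal (ind e s) * indicator {0..} s) = indicator {0..x}"
    by (auto simp: ind_def real indicator_def fun_eq_iff)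
  then show ?thesis using real assms by simp
next
  case PInf
  have "(\<lambda>s. ennreal (ind e s) * indicator {0..} s) = indicator {0..}"
    by (auto simp: ind_def PInf indicator_def fun_eq_iff)
  then show ?thesis using PInf by (simp add: emeasure_Ici_inf)
next
  case MInf then show ?thesis using assms by simp
qed

lemma chi_nn:
  assumes "\<And>d. d \<in># R \<Longrightarrow> 0 \<le> v (m - d)"
  shows "(\<lambda>s. ennreal (real (chi v R m s))) \<in> borel_measurable lborel \<and>
    (\<integral>\<^sup>+ s\<in>{0..}. ennreal (real (chi v R m s)) \<partial>lborel) = (\<Sum>d\<in>#R. e2ennreal (v (m - d)))"
  using assms
proof (induction R)
  case empty then show ?case by (simp add: chi_empty)
next
  case (add x R)
  have IH: "(\<lambda>s. ennreal (real (chi v R m s))) \<in> borel_measurable lborel"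
    "(\<integral>\<^sup>+ s\<in>{0..}. ennreal (real (chi v R m s)) \<partial>lborel) = (\<Sum>d\<in>#R. e2ennreal (v (m - d)))"
    using add by auto
  have e: "(\<lambda>s. ennreal (real (chi v (add_mset x R) m s))) = (\<lambda>s. ennreal (ind (v (m - x)) s) + ennreal (real (chi v R m s)))"
    by (auto simp: chi_add ind_def)
  have m: "(\<lambda>s. ennreal (real (chi v (add_mset x R) m s))) \<in> borel_measurable lborel"
    unfolding e by (rule borel_measurable_add[OF ind_meas IH(1)])
  have "(\<integral>\<^sup>+ s\<in>{0..}. ennreal (real (chi v (add_mset x R) m s)) \<partial>lborel)
     = (\<integral>\<^sup>+ s. ennreal (ind (v (m - x)) s) * indicator {0..} s + ennreal (real (chi v R m s)) * indicator {0..} s \<partial>lborel)"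
    by (rule nn_integral_cong) (auto simp: chi_add ind_def distrib_right)
  also have "\<dots> = (\<integral>\<^sup>+ s\<in>{0..}. ennreal (ind (v (m - x)) s) \<partial>lborel) + (\<integral>\<^sup>+ s\<in>{0..}. ennreal (real (chi v R m s)) \<partial>lborel)"
  proof (rule nn_integral_add)
    show "(\<lambda>s. ennreal (ind (v (m - x)) s) * indicator {0..} s) \<in> borel_measurable lborel"
      using ind_meas by measurable
    show "(\<lambda>s. ennreal (real (chi v R m s)) * indicator {0..} s) \<in> borel_measurable lborel"
      using IH(1) by measurable
  qed
  also have "\<dots> = (\<Sum>d\<in>#add_mset x R. e2ennreal (v (m - d)))"
    using IH(2) ind_nn[of "v (m - x)"] add.prems by simp
  finally show ?case using m by simp
qed



lemma J_nonneg: "a \<le> b \<Longrightarrow> 0 \<le> J e a b"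
  by (cases e) (auto simp: J_def)

lemma J_tele: "0 \<le> e \<Longrightarrow> J e 0 (real j) + J e (real j) (real (Suc j)) = J e 0 (real (Suc j))"
  by (cases e) (auto simp: J_def max_def min_def)

lemma J_min: "0 \<le> e \<Longrightarrow> ereal (J e 0 (real K)) = min e (ereal (real K))"
  by (cases e) (auto simp: J_def max_def min_def)

lemma J_mono: "0 \<le> e \<Longrightarrow> j \<le> j' \<Longrightarrow> J e (real j') (real (Suc j')) \<le> J e (real j) (real (Suc j))"
  by (cases e) (auto simp: J_def max_def min_def)

lemma J_zero: "0 \<le> e \<Longrightarrow> J e 0 0 = 0"
  by (cases e) (auto simp: J_def max_def min_def)

lemma ereal_sum_mset: "ereal (\<Sum>x\<in>#R. f x) = (\<Sum>x\<in>#R. ereal (f x))"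
proof (induction R)
  case (add y R)
  have "(\<Sum>x\<in>#add_mset y R. ereal (f x)) = ereal (f y) + ereal (\<Sum>x\<in>#R. f x)"
    using add by simp
  then show ?case by simp
qed simp

lemma sum_mset_nonneg_real: "(\<And>x. x \<in># R \<Longrightarrow> 0 \<le> f x) \<Longrightarrow> 0 \<le> (\<Sum>x\<in>#R. (f x :: real))"
  by (induction R) auto

lemma ennreal_sum_mset: "(\<And>x. x \<in># R \<Longrightarrow> 0 \<le> f x) \<Longrightarrow> ennreal (\<Sum>x\<in>#R. f x) = (\<Sum>x\<in>#R. ennreal (f x))"
  by (induction R) (auto simp: ennreal_plus sum_mset_nonneg_real)

lemma sum_mset_diff_real: "(\<Sum>x\<in>#R. (f x - g x :: real)) = (\<Sum>x\<in>#R. f x) - (\<Sum>x\<in>#R. g x)"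
  by (induction R) auto

lemma enn2ereal_sum_mset: "enn2ereal (\<Sum>x\<in>#R. f x) = (\<Sum>x\<in>#R. enn2ereal (f x))"
  by (induction R) (auto simp: plus_ennreal.rep_eq zero_ennreal.rep_eq)

lemma suminf_sum_mset_ennreal:
  fixes f :: "'a \<Rightarrow> nat \<Rightarrow> ennreal"
  shows "(\<Sum>n. \<Sum>x\<in>#R. f x n) = (\<Sum>x\<in>#R. \<Sum>n. f x n)"
proof (induction R)
  case empty then show ?case by simp
next
  case (add y R)
  have "(\<Sum>n. \<Sum>x\<in>#add_mset y R. f x n) = (\<Sum>n. f y n + (\<Sum>x\<in>#R. f x n))" by simp
  also have "\<dots> = (\<Sum>n. f y n) + (\<Sum>n. \<Sum>x\<in>#R. f x n)"
    by (rule suminf_add[OF summableI summableI, symmetric])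
  finally show ?case using add by simp
qed

lemma J_suminf:
  assumes "0 \<le> e"
  shows "(\<Sum>n. ennreal (J e (real n) (real (Suc n)))) = e2ennreal e"
proof -
  have ps: "(\<Sum>n<K. ennreal (J e (real n) (real (Suc n)))) = ennreal (J e 0 (real K))" for K
  proof (induction K)
    case 0 then show ?case using J_zero[OF assms] by simp
  next
    case (Suc K)
    have "(\<Sum>n<Suc K. ennreal (J e (real n) (real (Suc n)))) = ennreal (J e 0 (real K)) + ennreal (J e (real K) (real (Suc K)))"
      using Suc by simp
    also have "\<dots> = ennreal (J e 0 (real (Suc K)))"
      using J_tele[OF assms, of K] J_nonneg[of 0 "real K" e] J_nonneg[of "real K" "real (Suc K)" e]
      by (simp add: ennreal_plus[symmetric] del: ennreal_plus)
    finally show ?case .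
  qed
  have lim: "(\<lambda>K. ennreal (J e 0 (real K))) \<longlonglongrightarrow> e2ennreal e"
  proof (cases e)
    case (real x)
    have "eventually (\<lambda>K. ennreal (J e 0 (real K)) = e2ennreal e) sequentially"
      unfolding eventually_sequentially
    proof (intro exI allI impI)
      fix K assume "nat \<lceil>x\<rceil> \<le> K"
      then have "x \<le> real K" by linarith
      then show "ennreal (J e 0 (real K)) = e2ennreal e" using real assms by (simp add: J_def)
    qed
    then show ?thesis by (rule tendsto_eventually)
  next
    case PInf
    have "(\<lambda>K. ennreal (J e 0 (real K))) = (\<lambda>K. of_nat K)"
      by (auto simp: J_def PInf ennreal_of_nat_eq_real_of_nat)
    then show ?thesis using of_nat_tendsto_top_ennreal PInf by simp
  next
    case MInf then show ?thesis using assms by simp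
  qed
  have "(\<lambda>n. ennreal (J e (real n) (real (Suc n)))) sums e2ennreal e"
    unfolding sums_def ps by (rule lim)
  then show ?thesis by (rule sums_unique[symmetric])
qed



lemma v_prod_mset:
  assumes V: "is_padic_valuation p v"
  shows "v (\<Prod>x\<in>#R. f x) = (\<Sum>x\<in>#R. v (f x))"
  by (induction R) (simp_all add: v_one[OF V] v_mult[OF V])

theorem mainTheorem13:
  fixes p :: nat and h :: "int poly" and v :: "'k::field \<Rightarrow> ereal"
    and R :: "'k multiset" and m :: 'k
  assumes "prime p"
    and "lead_coeff h = 1"
    and "is_padic_valuation p v"
    and "map_poly of_int h = (\<Prod>\<delta>\<in>#R. [:- \<delta>, 1:])"
    and "padic_integer v m"
  shows "(\<forall>t::real. t > 0 \<longrightarrow> chi_hat v R m t \<in> \<nat>)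
    \<and> (\<forall>s t::real. 0 < s \<longrightarrow> s \<le> t \<longrightarrow> chi_hat v R m t \<le> chi_hat v R m s)
    \<and> v (poly (map_poly of_int h) m)
        = enn2ereal (\<integral>\<^sup>+ s\<in>{0..}. ennreal (real (chi v R m s)) \<partial>lborel)
    \<and> (\<integral>\<^sup>+ s\<in>{0..}. ennreal (real (chi v R m s)) \<partial>lborel)
        = (\<Sum>n. ennreal (chi_hat v R m (real (Suc n))))"
proof -
  note V = assms(3)
  have nn: "0 \<le> v (m - d)" if "d \<in># R" for d
  proof -
    have 1: "0 \<le> v d" by (rule root_nonneg[OF V assms(2) assms(4) that])
    have 2: "0 \<le> v m" by (rule padic_nonneg[OF V assms(5)])
    have "min (v m) (v (- d)) \<le> v (m + - d)" by (rule v_add[OF V])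
    then show ?thesis using 1 2 v_neg[OF V, of d] by (simp add: min_def split: if_splits)
  qed
  define A where "A K = (\<Sum>d\<in>#R. J (v (m - d)) 0 (real K))" for K :: nat
  have chihat: "chi_hat v R m t = (\<Sum>d\<in>#R. J (v (m - d)) (real j) (real (Suc j)))"
    if "\<lceil>t\<rceil> = int (Suc j)" for t j
  proof -
    have "real_of_int (\<lceil>t\<rceil> - 1) = real j" "real_of_int \<lceil>t\<rceil> = real (Suc j)" using that by auto
    then show ?thesis unfolding chi_hat_def
      by (simp only:) (rule integral_unique[OF chi_has_integral], simp)
  qed
  have Anat: "\<exists>k::nat. A K = real k" for K
  proof -
    obtain k :: nat where k: "(\<Sum>d\<in>#R. min (v (m-d)) (ereal (real K))) = ereal (real k)"
      using sum_min_nat[OF V assms(1) assms(4) assms(5)] by blast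
    have "ereal (A K) = (\<Sum>d\<in>#R. ereal (J (v (m - d)) 0 (real K)))"
      unfolding A_def by (rule ereal_sum_mset)
    also have "\<dots> = (\<Sum>d\<in>#R. min (v (m-d)) (ereal (real K)))"
      by (rule arg_cong[where f = sum_mset], rule image_mset_cong) (rule J_min[OF nn])
    finally show ?thesis using k by auto
  qed
  have diff: "(\<Sum>d\<in>#R. J (v (m - d)) (real j) (real (Suc j))) = A (Suc j) - A j" for j
  proof -
    have "(\<Sum>d\<in>#R. J (v (m - d)) (real j) (real (Suc j)))
        = (\<Sum>d\<in>#R. J (v (m - d)) 0 (real (Suc j)) - J (v (m - d)) 0 (real j))"
      by (rule arg_cong[where f = sum_mset], rule image_mset_cong)
        (use J_tele[OF nn] in \<open>simp add: algebra_simps\<close>)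
    then show ?thesis unfolding A_def by (simp add: sum_mset_diff_real)
  qed
  have hatpos: "0 \<le> (\<Sum>d\<in>#R. J (v (m - d)) (real j) (real (Suc j)))" for j
    by (rule sum_mset_nonneg_real) (rule J_nonneg, simp)
  have ceil: "\<lceil>t\<rceil> = int (Suc (nat (\<lceil>t\<rceil> - 1)))" if "0 < t" for t :: real
    using that by simp
  have P1: "\<forall>t::real. t > 0 \<longrightarrow> chi_hat v R m t \<in> \<nat>"
  proof (intro allI impI)
    fix t :: real assume "t > 0"
    define j where "j = nat (\<lceil>t\<rceil> - 1)"
    have e: "chi_hat v R m t = A (Suc j) - A j"
      using chihat[OF ceil[OF \<open>t > 0\<close>]] diff unfolding j_def by simp
    obtain k1 k0 :: nat where k: "A (Suc j) = real k1" "A j = real k0" using Anat by metis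
    have "0 \<le> A (Suc j) - A j" using hatpos[of j] diff[of j] by simp
    then have "A (Suc j) - A j = real (k1 - k0)" using k by auto
    then show "chi_hat v R m t \<in> \<nat>" using e by simp
  qed
  have P2: "\<forall>s t::real. 0 < s \<longrightarrow> s \<le> t \<longrightarrow> chi_hat v R m t \<le> chi_hat v R m s"
  proof (intro allI impI)
    fix s t :: real assume st: "0 < s" "s \<le> t"
    have jj: "nat (\<lceil>s\<rceil> - 1) \<le> nat (\<lceil>t\<rceil> - 1)" using st using ceiling_mono[OF st(2)] by (intro nat_mono) linarith
    have "chi_hat v R m t = (\<Sum>d\<in>#R. J (v (m - d)) (real (nat (\<lceil>t\<rceil> - 1))) (real (Suc (nat (\<lceil>t\<rceil> - 1)))))"
      using chihat[OF ceil] st by simp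
    also have "\<dots> \<le> (\<Sum>d\<in>#R. J (v (m - d)) (real (nat (\<lceil>s\<rceil> - 1))) (real (Suc (nat (\<lceil>s\<rceil> - 1)))))"
      by (rule sum_mset_mono) (rule J_mono[OF nn jj], assumption)
    also have "\<dots> = chi_hat v R m s"
      using chihat[OF ceil] st by simp
    finally show "chi_hat v R m t \<le> chi_hat v R m s" .
  qed
  have I: "(\<integral>\<^sup>+ s\<in>{0..}. ennreal (real (chi v R m s)) \<partial>lborel) = (\<Sum>d\<in>#R. e2ennreal (v (m - d)))"
    using chi_nn[of R v m] nn by blast
  have P3: "v (poly (map_poly of_int h) m)
        = enn2ereal (\<integral>\<^sup>+ s\<in>{0..}. ennreal (real (chi v R m s)) \<partial>lborel)"
  proof -
    have "v (poly (map_poly of_int h) m) = (\<Sum>d\<in>#R. v (m - d))"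
      unfolding assms(4) poly_prod_mset v_prod_mset[OF V] by simp
    also have "\<dots> = (\<Sum>d\<in>#R. enn2ereal (e2ennreal (v (m - d))))"
      by (rule arg_cong[where f = sum_mset], rule image_mset_cong) (simp add: enn2ereal_e2ennreal nn)
    also have "\<dots> = enn2ereal (\<integral>\<^sup>+ s\<in>{0..}. ennreal (real (chi v R m s)) \<partial>lborel)"
      unfolding I enn2ereal_sum_mset ..
    finally show ?thesis .
  qed
  have P4: "(\<integral>\<^sup>+ s\<in>{0..}. ennreal (real (chi v R m s)) \<partial>lborel)
        = (\<Sum>n. ennreal (chi_hat v R m (real (Suc n))))"
  proof -
    have "(\<integral>\<^sup>+ s\<in>{0..}. ennreal (real (chi v R m s)) \<partial>lborel)
        = (\<Sum>d\<in>#R. \<Sum>n. ennreal (J (v (m - d)) (real n) (real (Suc n))))"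
      unfolding I
      by (rule arg_cong[where f = sum_mset], rule image_mset_cong) (rule J_suminf[OF nn, symmetric])
    also have "\<dots> = (\<Sum>n. \<Sum>d\<in>#R. ennreal (J (v (m - d)) (real n) (real (Suc n))))"
      by (rule suminf_sum_mset_ennreal[symmetric])
    also have "\<dots> = (\<Sum>n. ennreal (chi_hat v R m (real (Suc n))))"
    proof (rule suminf_cong)
      fix n
      have "chi_hat v R m (real (Suc n)) = (\<Sum>d\<in>#R. J (v (m - d)) (real n) (real (Suc n)))"
        by (rule chihat, rule ceiling_of_nat)
      then show "(\<Sum>d\<in>#R. ennreal (J (v (m - d)) (real n) (real (Suc n)))) = ennreal (chi_hat v R m (real (Suc n)))"
        by (simp add: ennreal_sum_mset J_nonneg)
    qed
    finally show ?thesis .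
  qed
  show ?thesis using P1 P2 P3 P4 by blast
qed

end
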